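(* Let $\mathbb{T}=t_0t_1t_2\cdots\in\{0,1\}^\omega$ be the Thue–Morse word, where $t_n$ is the sum modulo 2 of the binary digits of $n$. Define $\varphi':\{0,1\}^+\to\{0,1,2\}$ by $\varphi'(u)=0$ if $u$ is a prefix of $\mathbb{T}$ ending with $0$, $\varphi'(u)=1$ if $u$ is a prefix of $\mathbb{T}$ ending with $1$, and $\varphi'(u)=2$ otherwise. Then $\mathbb{T}$ admits no $\varphi'$-monochromatic factorization.
   Context: A factorization $x=V_0V_1V_2\cdots$ with all $V_i$ non-empty finite words is $\varphi$-monochromatic if there is a color $c$ with $\varphi(V_i)=c$ for all $i\ge0$. *)

theory Defs
  imports Main
begin

fun bin_digit_sum :: "nat \<Rightarrow> nat" where
  "bin_digit_sum n = (if n = 0 then 0 else n mod 2 + bin_digit_sum (n div 2))"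

definition thue_morse :: "nat \<Rightarrow> nat" where
  "thue_morse n = bin_digit_sum n mod 2"

definition is_prefix_of :: "'a list \<Rightarrow> (nat \<Rightarrow> 'a) \<Rightarrow> bool" where
  "is_prefix_of u x \<longleftrightarrow> u = map x [0..<length u]"

(* the colouring phi' (only meaningful on non-empty words) *)
definition phi' :: "nat list \<Rightarrow> nat" where
  "phi' u = (if is_prefix_of u thue_morse \<and> u \<noteq> [] \<and> last u = 0 then 0
             else if is_prefix_of u thue_morse \<and> u \<noteq> [] \<and> last u = 1 then 1
             else 2)"

(* x = V 0 V 1 V 2 ... with all V i non-empty finite words *)
definition is_factorization :: "(nat \<Rightarrow> 'a) \<Rightarrow> (nat \<Rightarrow> 'a list) \<Rightarrow> bool" where
  "is_factorization x V \<longleftrightarrow>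
     (\<forall>i. V i \<noteq> []) \<and> (\<forall>n. is_prefix_of (concat (map V [0..<n])) x)"

definition monochromatic_factorization ::
  "('a list \<Rightarrow> 'c) \<Rightarrow> (nat \<Rightarrow> 'a) \<Rightarrow> (nat \<Rightarrow> 'a list) \<Rightarrow> bool" where
  "monochromatic_factorization \<phi> x V \<longleftrightarrow>
     is_factorization x V \<and> (\<exists>c. \<forall>i. \<phi> (V i) = c)"

end

theory Submission
  imports Defs
begin

declare bin_digit_sum.simps[simp del]

abbreviation tm where "tm \<equiv> thue_morse"

lemma tm_le1: "tm n \<le> 1"
  unfolding thue_morse_def by simp

lemma tm_even: "tm (2*n) = tm n"
proof (cases "n = 0")
  case True then show ?thesis by simp
next
  case False
  have "bin_digit_sum (2*n) = bin_digit_sum n"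
    by (subst bin_digit_sum.simps) (use False in simp)
  then show ?thesis unfolding thue_morse_def by simp
qed

lemma tm_odd: "tm (2*n+1) = 1 - tm n"
proof -
  have "bin_digit_sum (2*n+1) = 1 + bin_digit_sum n"
    by (subst bin_digit_sum.simps) simp
  then show ?thesis unfolding thue_morse_def by presburger
qed

lemma tm_adj: assumes "tm k = tm (Suc k)" shows "odd k"
proof (rule ccontr)
  assume "\<not> odd k"
  then obtain m where k: "k = 2*m" by (auto elim: evenE)
  have "tm (Suc k) = 1 - tm m" using tm_odd[of m] k by simp
  moreover have "tm k = tm m" using tm_even k by simp
  ultimately show False using assms tm_le1[of m] by arith
qed

lemma no_triple: assumes "tm a = tm (a+1)" "tm (a+1) = tm (a+2)" shows False
  using tm_adj[of a] tm_adj[of "a+1"] assms by simp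

lemma tm_neq: "tm a \<noteq> tm b \<Longrightarrow> tm b \<noteq> tm c \<Longrightarrow> tm a = tm c"
  using tm_le1[of a] tm_le1[of b] tm_le1[of c] by linarith

lemma no_alt5:
  assumes "tm q \<noteq> tm (q+1)" "tm (q+1) \<noteq> tm (q+2)" "tm (q+2) \<noteq> tm (q+3)" "tm (q+3) \<noteq> tm (q+4)"
  shows False
proof (cases "even q")
  case True
  then obtain m where q: "q = 2*m" by (auto elim: evenE)
  have "tm q = tm (q+2)" "tm (q+2) = tm (q+4)" using assms tm_neq by blast+
  moreover have "tm q = tm m" "tm (q+2) = tm (m+1)" "tm (q+4) = tm (m+2)"
  proof -
    have "q+2 = 2*(m+1)" "q+4 = 2*(m+2)" using q by simp_all
    then show "tm q = tm m" "tm (q+2) = tm (m+1)" "tm (q+4) = tm (m+2)"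
      using q by (simp_all only: tm_even)
  qed
  ultimately show False using no_triple[of m] by simp
next
  case False
  then obtain m where q: "q = 2*m+1" by (auto elim: oddE)
  have e1: "tm (q+1) = tm (m+1)" "tm (q+3) = tm (m+2)"
  proof -
    have "q+1 = 2*(m+1)" "q+3 = 2*(m+2)" using q by simp_all
    then show "tm (q+1) = tm (m+1)" "tm (q+3) = tm (m+2)" by (simp_all only: tm_even)
  qed
  have e2: "tm q = 1 - tm m" using tm_odd q by simp
  have "tm (q+1) = tm (q+3)" using assms tm_neq by blast
  moreover have "tm m = tm (m+1)"
    using assms(1) e1 e2 tm_le1[of m] tm_le1[of "m+1"] by linarith
  ultimately show False using no_triple[of m] e1 by simp
qed

lemma tm0: "tm 0 = 0" unfolding thue_morse_def by (subst bin_digit_sum.simps) simp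
lemma tm1: "tm 1 = 1" using tm_odd[of 0] tm0 by simp
lemma tm2: "tm 2 = 1" using tm_even[of 1] tm1 by simp

definition Q :: "(nat \<Rightarrow> nat) \<Rightarrow> nat \<Rightarrow> bool" where
  "Q L c \<longleftrightarrow> (\<forall>i. 1 \<le> L i) \<and> (\<forall>i j. j < L i \<longrightarrow> tm ((\<Sum>k<i. L k) + j) = tm j)
     \<and> (\<forall>i. tm (L i - 1) = c)"

lemma noQ: "\<not> Q L c"
proof (induction "L 0" arbitrary: L c rule: less_induct)
  case less
  show ?case
  proof
    assume q: "Q L c"
    define P where "P i = (\<Sum>k<i. L k)" for i
    have H1: "1 \<le> L i" for i using q unfolding Q_def by blast
    have H2: "j < L i \<Longrightarrow> tm (P i + j) = tm j" for i j using q unfolding Q_def P_def by blast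
    have H3: "tm (L i - 1) = c" for i using q unfolding Q_def by blast
    have PS: "P (Suc i) = P i + L i" for i unfolding P_def by simp
    have P0: "P 0 = 0" unfolding P_def by simp
    have st: "tm (P (Suc i)) = 0" for i using H2[of 0 "Suc i"] H1[of "Suc i"] tm0 by simp
    have last: "tm (P (Suc i) - 1) = c" for i
      using H2[of "L i - 1" i] H1[of i] H3[of i] PS[of i] by simp
    have S1: "L i \<noteq> 1" for i
    proof
      assume L: "L i = 1"
      have c: "c = 0" using H3[of i] L tm0 by simp
      have a: "tm (P i) = 0" using H2[of 0 i] L tm0 by simp
      have b: "tm (P i + 1) = 0" using st[of i] PS[of i] L by simp
      show False
      proof (cases i)
        case 0 then show False using b P0 tm1 by simp
      next
        case (Suc i')
        have "tm (P i - 1) = 0" using last[of i'] Suc c by simp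
        moreover have "P i \<ge> 1" using Suc PS[of i'] H1[of i'] by simp
        ultimately show False using no_triple[of "P i - 1"] a b by simp
      qed
    qed
    have S2: "L i \<noteq> 2" for i
    proof
      assume L: "L i = 2"
      have c: "c = 1" using H3[of i] L tm1 by simp
      have a: "tm (P i) = 0" using H2[of 0 i] L tm0 by simp
      have a1: "tm (P i + 1) = 1" using H2[of 1 i] L tm1 by simp
      have b: "tm (P i + 2) = 0" using st[of i] PS[of i] L by simp
      have L2: "L (Suc i) \<ge> 2" using H1[of "Suc i"] S1[of "Suc i"] by simp
      have b1: "tm (P i + 3) = 1" using H2[of 1 "Suc i"] L2 PS[of i] L tm1
        by (simp add: numeral_3_eq_3)
      show False
      proof (cases i)
        case 0 then show False using b P0 tm2 by (simp add: numeral_2_eq_2)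
      next
        case (Suc i')
        have z: "tm (P i - 1) = 1" using last[of i'] Suc c by simp
        have "P i \<ge> 1" using Suc PS[of i'] H1[of i'] by simp
        then have e: "P i - 1 + 1 = P i" "P i - 1 + 2 = P i + 1" "P i - 1 + 3 = P i + 2"
            "P i - 1 + 4 = P i + 3" by simp_all
        show False using no_alt5[of "P i - 1"] unfolding e using z a a1 b b1 by simp
      qed
    qed
    have S3: "L i \<noteq> 3" for i
    proof
      assume L: "L i = 3"
      have a1: "tm (P i + 1) = 1" using H2[of 1 i] L tm1 by simp
      have a2: "tm (P i + 2) = 1" using H2[of 2 i] L tm2 by simp
      have L3: "L (Suc i) \<ge> 3" using H1[of "Suc i"] S1[of "Suc i"] S2[of "Suc i"] by simp
      have b1: "tm (P i + 4) = 1" using H2[of 1 "Suc i"] L3 PS[of i] L tm1 by (simp add: add.commute)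
      have b2: "tm (P i + 5) = 1" using H2[of 2 "Suc i"] L3 PS[of i] L tm2 by (simp add: add.commute)
      have "odd (P i + 1)" using tm_adj[of "P i + 1"] a1 a2 by simp
      moreover have "odd (P i + 4)" using tm_adj[of "P i + 4"] b1 b2 by (simp add: add.commute)
      ultimately show False by simp
    qed
    have L4: "L i \<ge> 3" for i using H1[of i] S1[of i] S2[of i] S3[of i] by simp
    have Pev: "even (P i)" for i
    proof -
      have "tm (P i + 1) = tm (Suc (P i + 1))"
        using H2[of 1 i] H2[of 2 i] L4[of i] tm1 tm2 by simp
      then have "odd (P i + 1)" by (rule tm_adj)
      then show ?thesis by simp
    qed
    have Lev: "even (L i)" for i using Pev[of i] Pev[of "Suc i"] PS[of i] by simp
    define L' where "L' k = L k div 2" for k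
    have P': "2 * (\<Sum>k<i. L' k) = P i" for i
      unfolding P_def L'_def sum_distrib_left using Lev by (intro sum.cong) auto
    have "Q L' (1 - c)"
      unfolding Q_def
    proof (intro conjI allI impI)
      fix i show "1 \<le> L' i" using L4[of i] Lev[of i] unfolding L'_def by auto
    next
      fix i j assume j: "j < L' i"
      have "tm ((\<Sum>k<i. L' k) + j) = tm (2 * ((\<Sum>k<i. L' k) + j))" by (rule tm_even[symmetric])
      also have "\<dots> = tm (P i + 2*j)" using P'[of i] by (simp add: algebra_simps)
      also have "\<dots> = tm (2*j)" using H2[of "2*j" i] j unfolding L'_def by simp
      also have "\<dots> = tm j" by (rule tm_even)
      finally show "tm ((\<Sum>k<i. L' k) + j) = tm j" .
    next
      fix i
      have "L i - 1 = 2 * (L' i - 1) + 1" using L4[of i] Lev[of i] unfolding L'_def by auto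
      then have "c = 1 - tm (L' i - 1)" using H3[of i] tm_odd by metis
      then show "tm (L' i - 1) = 1 - c" using tm_le1[of "L' i - 1"] by simp
    qed
    moreover have "L' 0 < L 0" using L4[of 0] unfolding L'_def by simp
    ultimately show False using less by blast
  qed
qed

lemma pref_nth: "is_prefix_of u x \<Longrightarrow> k < length u \<Longrightarrow> u ! k = x k"
  unfolding is_prefix_of_def by (metis add_0 diff_zero length_map length_upt nth_map_upt)

lemma len_concat: "length (concat (map V [0..<i])) = (\<Sum>k<i. length (V k))"
  by (induction i) simp_all

theorem mainTheorem11:
  shows "\<not> (\<exists>V. monochromatic_factorization phi' thue_morse V)"
proof
  assume "\<exists>V. monochromatic_factorization phi' thue_morse V"
  then obtain V c where ne: "\<And>i. V i \<noteq> []"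
    and pf: "\<And>n. is_prefix_of (concat (map V [0..<n])) tm"
    and col: "\<And>i. phi' (V i) = c"
    unfolding monochromatic_factorization_def is_factorization_def by blast
  define L where "L i = length (V i)" for i
  have p0: "is_prefix_of (V 0) tm" using pf[of 1] by simp
  have lastV0: "last (V 0) = tm (L 0 - 1)"
    using pref_nth[OF p0, of "L 0 - 1"] ne[of 0] unfolding L_def by (simp add: last_conv_nth)
  have "phi' (V 0) \<noteq> 2"
    using p0 ne[of 0] lastV0 tm_le1[of "L 0 - 1"] unfolding phi'_def by auto
  then have c2: "c \<noteq> 2" using col by metis
  have pi: "is_prefix_of (V i) tm" and lc: "last (V i) = c" for i
    using col[of i] c2 unfolding phi'_def by (auto split: if_splits)
  have "Q L c" unfolding Q_def
  proof (intro conjI allI impI)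
    fix i show "1 \<le> L i" using ne[of i] unfolding L_def by (simp add: Suc_le_eq)
  next
    fix i j assume j: "j < L i"
    have "concat (map V [0..<Suc i]) = concat (map V [0..<i]) @ V i" by simp
    with pf[of "Suc i"] have pp: "is_prefix_of (concat (map V [0..<i]) @ V i) tm" by simp
    have "(concat (map V [0..<i]) @ V i) ! ((\<Sum>k<i. L k) + j) = V i ! j"
      using len_concat[of V i] unfolding L_def by (simp add: nth_append)
    moreover have "(concat (map V [0..<i]) @ V i) ! ((\<Sum>k<i. L k) + j) = tm ((\<Sum>k<i. L k) + j)"
      using pref_nth[OF pp] j len_concat[of V i] unfolding L_def by simp
    moreover have "V i ! j = tm j" using pref_nth[OF pi] j unfolding L_def by simp
    ultimately show "tm ((\<Sum>k<i. L k) + j) = tm j" by simp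
  next
    fix i show "tm (L i - 1) = c"
      using pref_nth[OF pi, of "L i - 1"] ne[of i] lc[of i] unfolding L_def
      by (simp add: last_conv_nth)
  qed
  then show False using noQ by blast
qed

end
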